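(* Let $\mathcal X=\{1,\dots,N\}$ with $N\ge 2$, let $0<\alpha<1$ and $0\le\varepsilon\le 1-\frac1N$. Let $p,q$ be probability distributions on $\mathcal X$ with $p(x)>0$ for all $x\in\mathcal X$, and let $y\in\mathcal X$. Put $p_0'=U_{\alpha,0}(p,y)$ and $p_\varepsilon'=U_{\alpha,\varepsilon}(p,y)$. Then \[ D(q\parallel p_0')\;\ge\; D(q\parallel p_\varepsilon')-\log\frac1{1-\varepsilon}. \]
   Context: All logarithms are natural. For a distribution $p$ on $\mathcal X$, a letter $y\in\mathcal X$, $0<\alpha<1$ and $0\le\varepsilon\le 1-\frac1N$, the update $U_{\alpha,\varepsilon}(p,y)$ is the distribution $p'$ with $p'(x)=\alpha p(x)+(1-\alpha)(1-\varepsilon)$ if $x=y$ and $p'(x)=\alpha p(x)+(1-\alpha)\frac{\varepsilon}{N-1}$ if $x\ne y$. For distributions $q,r$ on $\mathcal X$ with $r(x)>0$ for all $x$, the KL divergence is $D(q\parallel r)=\sum_{x:\,q(x)>0} q(x)\log\frac{q(x)}{r(x)}$. *)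

theory Defs
  imports Complex_Main
begin

text \<open>Alphabet X = {1..N}; distributions are functions nat => real restricted to {1..N}.\<close>

definition is_distribution :: "nat \<Rightarrow> (nat \<Rightarrow> real) \<Rightarrow> bool" where
  "is_distribution N p \<longleftrightarrow> (\<forall>x\<in>{1..N}. p x \<ge> 0) \<and> (\<Sum>x\<in>{1..N}. p x) = 1"

definition upd :: "nat \<Rightarrow> real \<Rightarrow> real \<Rightarrow> (nat \<Rightarrow> real) \<Rightarrow> nat \<Rightarrow> (nat \<Rightarrow> real)" where
  "upd N \<alpha> \<epsilon> p y = (\<lambda>x. if x = y then \<alpha> * p x + (1 - \<alpha>) * (1 - \<epsilon>)
                          else \<alpha> * p x + (1 - \<alpha>) * (\<epsilon> / (real N - 1)))"

definition KL :: "nat \<Rightarrow> (nat \<Rightarrow> real) \<Rightarrow> (nat \<Rightarrow> real) \<Rightarrow> real" where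
  "KL N q r = (\<Sum>x\<in>{x\<in>{1..N}. q x > 0}. q x * ln (q x / r x))"

end

theory Submission
  imports Defs
begin

theorem lemma1:
  fixes N :: nat and \<alpha> \<epsilon> :: real and p q :: "nat \<Rightarrow> real" and y :: nat
  assumes "N \<ge> 2"
    and "0 < \<alpha>" and "\<alpha> < 1"
    and "0 \<le> \<epsilon>" and "\<epsilon> \<le> 1 - 1 / real N"
    and "is_distribution N p" and "is_distribution N q"
    and "\<forall>x\<in>{1..N}. p x > 0"
    and "y \<in> {1..N}"
  shows "KL N q (upd N \<alpha> 0 p y) \<ge> KL N q (upd N \<alpha> \<epsilon> p y) - ln (1 / (1 - \<epsilon>))"
proof -
  define S where "S = {x\<in>{1..N}. q x > 0}"
  define r0 where "r0 = upd N \<alpha> 0 p y"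
  define re where "re = upd N \<alpha> \<epsilon> p y"
  have N1: "real N - 1 > 0" using assms(1) by simp
  have "1 / real N > 0" using assms(1) by simp
  hence e1: "\<epsilon> < 1" using assms(5) by linarith
  have qnn: "\<forall>x\<in>{1..N}. q x \<ge> 0" and qs: "(\<Sum>x\<in>{1..N}. q x) = 1"
    using assms(7) unfolding is_distribution_def by auto
  have sumS: "(\<Sum>x\<in>S. q x) = 1"
  proof -
    have "(\<Sum>x\<in>S. q x) = (\<Sum>x\<in>{1..N}. if q x > 0 then q x else 0)"
      unfolding S_def by (rule sum.inter_filter) simp
    also have "\<dots> = (\<Sum>x\<in>{1..N}. q x)"
      by (rule sum.cong) (use qnn in force)+
    finally show ?thesis using qs by simp
  qed
  have pt: "q x * ln (q x / r0 x) \<ge> q x * ln (q x / re x) + q x * ln (1 - \<epsilon>)" if x: "x \<in> S" for x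
  proof -
    have xN: "x \<in> {1..N}" and qx: "q x > 0" using x unfolding S_def by auto
    have px: "p x > 0" using assms(8) xN by auto
    have ed: "\<epsilon> / (real N - 1) \<ge> 0" using N1 assms(4) by simp
    have r0p: "r0 x > 0" unfolding r0_def upd_def using px assms(2,3) by (auto intro!: add_pos_pos)
    have rep: "re x > 0" unfolding re_def upd_def using px assms(2,3,4) e1 ed N1
      by (auto intro!: add_pos_nonneg)
    have le: "(1 - \<epsilon>) * r0 x \<le> re x"
    proof (cases "x = y")
      case True
      have "(1-\<epsilon>) * (\<alpha> * p x) \<le> \<alpha> * p x"
        using assms(2,4) px by (simp add: mult_le_cancel_right1 algebra_simps)
      then show ?thesis using True unfolding r0_def re_def upd_def by (simp add: algebra_simps)
    next
      case False
      have "(1-\<epsilon>) * (\<alpha> * p x) \<le> \<alpha> * p x"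
        using assms(2,4) px by (simp add: algebra_simps)
      moreover have "(1 - \<alpha>) * (\<epsilon> / (real N - 1)) \<ge> 0" using ed assms(3) by (intro mult_nonneg_nonneg) auto
      ultimately show ?thesis using False unfolding r0_def re_def upd_def by simp
    qed
    have "ln (1 - \<epsilon>) + ln (r0 x) \<le> ln (re x)"
    proof -
      have "ln (1 - \<epsilon>) + ln (r0 x) = ln ((1 - \<epsilon>) * r0 x)"
        using r0p e1 by (simp add: ln_mult)
      also have "\<dots> \<le> ln (re x)" using le r0p e1 by (intro ln_mono) auto
      finally show ?thesis .
    qed
    hence "ln (q x / r0 x) \<ge> ln (q x / re x) + ln (1 - \<epsilon>)"
      using qx r0p rep by (simp add: ln_div)
    thus ?thesis using qx by (simp add: distrib_left[symmetric] mult_left_mono)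
  qed
  have "KL N q re = (\<Sum>x\<in>S. q x * ln (q x / re x))" unfolding KL_def S_def ..
  moreover have "KL N q r0 = (\<Sum>x\<in>S. q x * ln (q x / r0 x))" unfolding KL_def S_def ..
  moreover have "(\<Sum>x\<in>S. q x * ln (q x / r0 x)) \<ge> (\<Sum>x\<in>S. q x * ln (q x / re x) + q x * ln (1 - \<epsilon>))"
    by (rule sum_mono) (rule pt)
  moreover have "(\<Sum>x\<in>S. q x * ln (q x / re x) + q x * ln (1 - \<epsilon>))
     = (\<Sum>x\<in>S. q x * ln (q x / re x)) + ln (1 - \<epsilon>)"
    by (simp add: sum.distrib sum_distrib_right[symmetric] sumS)
  moreover have "ln (1 / (1 - \<epsilon>)) = - ln (1 - \<epsilon>)" using e1 by (simp add: ln_div)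
  ultimately show ?thesis unfolding r0_def re_def by linarith
qed

end
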